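(* Let $\Psi\in\mathcal{H}$, and let $\ell_\Psi\in\mathbb{R}^2$ be its constant value on $\mathcal{S}_0$. Then there exists a family $(\tilde\Psi^\varepsilon)_{0<\varepsilon\le1}$ of smooth, compactly supported, divergence-free vector fields on $\overline{\mathcal{F}_0}$ such that $\tilde\Psi^\varepsilon=\ell_\Psi$ on $\partial\mathcal{S}_0$ for every $\varepsilon$, and $\|\nabla\tilde\Psi^\varepsilon\|_{L^\infty(\mathcal{F}_0)}\to0$ as $\varepsilon\to0^+$.
   Context: $\mathcal{S}_0$ is the closed unit disk in $\mathbb{R}^2$, $\mathcal{F}_0:=\mathbb{R}^2\setminus\mathcal{S}_0$, and $\mathcal{H}:=\{\Psi\in L^2(\mathbb{R}^2;\mathbb{R}^2):\operatorname{div}\Psi=0\text{ in }\mathbb{R}^2,\ \nabla\Psi=0\text{ in }\mathcal{S}_0\}$ (so each $\Psi\in\mathcal{H}$ is constant on $\mathcal{S}_0$). *)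

theory Defs
  imports "HOL-Analysis.Analysis"
begin

fun iter_dir_deriv :: "'a::real_normed_vector list \<Rightarrow> ('a \<Rightarrow> 'b::real_normed_vector) \<Rightarrow> 'a \<Rightarrow> 'b" where
  "iter_dir_deriv [] f = f"
| "iter_dir_deriv (v # vs) f = (\<lambda>x. frechet_derivative (iter_dir_deriv vs f) (at x) v)"

definition smooth :: "('a::real_normed_vector \<Rightarrow> 'b::real_normed_vector) \<Rightarrow> bool" where
  "smooth f \<longleftrightarrow> (\<forall>vs x. iter_dir_deriv vs f differentiable (at x))"

definition test_fun :: "(real^2 \<Rightarrow> real) \<Rightarrow> bool" where
  "test_fun \<phi> \<longleftrightarrow> smooth \<phi> \<and> compact (closure {x. \<phi> x \<noteq> 0})"

definition grad :: "(real^2 \<Rightarrow> real) \<Rightarrow> real^2 \<Rightarrow> real^2" where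
  "grad \<phi> x = (\<Sum>i\<in>Basis. frechet_derivative \<phi> (at x) i *\<^sub>R i)"

definition divergence :: "(real^2 \<Rightarrow> real^2) \<Rightarrow> real^2 \<Rightarrow> real" where
  "divergence F x = (\<Sum>i\<in>Basis. frechet_derivative F (at x) i \<bullet> i)"

definition S0 :: "(real^2) set" where "S0 = cball 0 1"
definition F0 :: "(real^2) set" where "F0 = - S0"

text \<open>The space H: L^2 vector fields, distributionally divergence-free on R^2,
  with vanishing distributional gradient in (the interior of) S0.\<close>
definition in_H :: "(real^2 \<Rightarrow> real^2) \<Rightarrow> bool" where
  "in_H \<Psi> \<longleftrightarrow>
     \<Psi> \<in> borel_measurable lebesgue \<and>
     integrable lebesgue (\<lambda>x. (norm (\<Psi> x))\<^sup>2) \<and>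
     (\<forall>\<phi>. test_fun \<phi> \<longrightarrow> integral\<^sup>L lebesgue (\<lambda>x. \<Psi> x \<bullet> grad \<phi> x) = 0) \<and>
     (\<forall>\<phi> v. test_fun \<phi> \<and> closure {x. \<phi> x \<noteq> 0} \<subseteq> interior S0 \<longrightarrow>
        integral\<^sup>L lebesgue (\<lambda>x. frechet_derivative \<phi> (at x) v *\<^sub>R \<Psi> x) = 0)"

end

theory Submission
  imports Defs "HOL-Computational_Algebra.Polynomial"
begin


inductive_set SC :: "('a::real_inner \<Rightarrow> real) set" where
  const: "(\<lambda>x. c) \<in> SC"
| lin: "bounded_linear L \<Longrightarrow> L \<in> SC"
| sq: "(\<lambda>x. x \<bullet> x) \<in> SC"
| add: "f \<in> SC \<Longrightarrow> g \<in> SC \<Longrightarrow> (\<lambda>x. f x + g x) \<in> SC"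
| mult: "f \<in> SC \<Longrightarrow> g \<in> SC \<Longrightarrow> (\<lambda>x. f x * g x) \<in> SC"
| inv: "f \<in> SC \<Longrightarrow> (\<forall>x. f x \<noteq> 0) \<Longrightarrow> (\<lambda>x. inverse (f x)) \<in> SC"
| ln: "f \<in> SC \<Longrightarrow> (\<forall>x. f x > 0) \<Longrightarrow> (\<lambda>x. ln (f x)) \<in> SC"
| chain: "(\<forall>k t. (hs k has_real_derivative hs (Suc k) t) (at t)) \<Longrightarrow> f \<in> SC \<Longrightarrow> (\<lambda>x. hs n (f x)) \<in> SC"

lemma SC_uminus: "f \<in> SC \<Longrightarrow> (\<lambda>x. - f x) \<in> SC"
proof -
  assume "f \<in> SC"
  hence "(\<lambda>x. (-1) * f x) \<in> SC" by (intro SC.mult SC.const)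
  thus ?thesis by simp
qed

lemma SC_diff: "f \<in> SC \<Longrightarrow> g \<in> SC \<Longrightarrow> (\<lambda>x. f x - g x) \<in> SC"
  using SC.add[OF _ SC_uminus, of f g] by simp

lemma SC_divide: "f \<in> SC \<Longrightarrow> g \<in> SC \<Longrightarrow> (\<forall>x. g x \<noteq> 0) \<Longrightarrow> (\<lambda>x. f x / g x) \<in> SC"
proof -
  assume a: "f \<in> SC" "g \<in> SC" "\<forall>x. g x \<noteq> 0"
  have "(\<lambda>x. f x * inverse (g x)) \<in> SC" using a by (intro SC.mult SC.inv)
  thus ?thesis by (simp add: divide_inverse)
qed

lemma SC_deriv:
  assumes "f \<in> SC"
  shows "\<exists>D. (\<forall>x. (f has_derivative D x) (at x)) \<and> (\<forall>v. (\<lambda>x. D x v) \<in> SC)"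
  using assms
proof induction
  case (const c)
  show ?case by (rule exI[of _ "\<lambda>x v. 0"]) (auto intro: SC.const)
next
  case (lin L)
  thus ?case by (intro exI[of _ "\<lambda>x. L"]) (auto intro: SC.const bounded_linear_imp_has_derivative)
next
  case sq
  show ?case
    apply (rule exI[of _ "\<lambda>x v. 2 * (v \<bullet> x)"])
    apply (auto intro!: derivative_eq_intros SC.lin bounded_linear_const_mult bounded_linear_inner_right simp: inner_commute)
    done
next
  case (add f g)
  then obtain Df Dg where "\<forall>x. (f has_derivative Df x) (at x)" "\<forall>v. (\<lambda>x. Df x v) \<in> SC"
     "\<forall>x. (g has_derivative Dg x) (at x)" "\<forall>v. (\<lambda>x. Dg x v) \<in> SC" by blast
  thus ?case
    by (intro exI[of _ "\<lambda>x v. Df x v + Dg x v"]) (auto intro!: derivative_eq_intros SC.add)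
next
  case (mult f g)
  then obtain Df Dg where "\<forall>x. (f has_derivative Df x) (at x)" "\<forall>v. (\<lambda>x. Df x v) \<in> SC"
     "\<forall>x. (g has_derivative Dg x) (at x)" "\<forall>v. (\<lambda>x. Dg x v) \<in> SC" by blast
  with mult show ?case
    by (intro exI[of _ "\<lambda>x v. f x * Dg x v + Df x v * g x"]) (auto intro!: derivative_eq_intros SC.add SC.mult)
next
  case (inv f)
  then obtain Df where "\<forall>x. (f has_derivative Df x) (at x)" "\<forall>v. (\<lambda>x. Df x v) \<in> SC" by blast
  with inv show ?case
    by (intro exI[of _ "\<lambda>x v. - (inverse (f x) * Df x v * inverse (f x))"])
       (auto intro!: derivative_eq_intros SC_uminus SC.mult SC.inv)
next
  case (ln f)
  then obtain Df where Df: "\<forall>x. (f has_derivative Df x) (at x)" "\<forall>v. (\<lambda>x. Df x v) \<in> SC" by blast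
  have "((\<lambda>x. ln (f x)) has_derivative (\<lambda>v. inverse (f x) * Df x v)) (at x)" for x
  proof -
    have "(ln has_derivative (\<lambda>v. inverse (f x) * v)) (at (f x))"
    proof -
      have "f x > 0" using ln by blast
      thus ?thesis using DERIV_ln[of "f x"] by (simp add: has_field_derivative_def)
    qed
    from has_derivative_compose[OF Df(1)[rule_format] this] show ?thesis .
  qed
  with ln Df show ?case
    by (intro exI[of _ "\<lambda>x v. inverse (f x) * Df x v"]) (auto intro!: SC.mult SC.inv, metis less_irrefl)
next
  case (chain hs f n)
  then obtain Df where Df: "\<forall>x. (f has_derivative Df x) (at x)" "\<forall>v. (\<lambda>x. Df x v) \<in> SC" by blast
  have "((\<lambda>x. hs n (f x)) has_derivative (\<lambda>v. hs (Suc n) (f x) * Df x v)) (at x)" for x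
  proof -
    have "(hs n has_derivative (\<lambda>v. hs (Suc n) (f x) * v)) (at (f x))"
      using chain(1) by (simp add: has_field_derivative_def)
    from has_derivative_compose[OF Df(1)[rule_format] this] show ?thesis .
  qed
  moreover have "(\<lambda>x. hs (Suc n) (f x) * Df x v) \<in> SC" for v
    by (rule SC.mult[OF SC.chain[OF chain(1) chain(2)] Df(2)[rule_format]])
  ultimately show ?case
    by (intro exI[of _ "\<lambda>x v. hs (Suc n) (f x) * Df x v"]) auto
qed

lemma smooth_closed:
  assumes "P f" "\<And>g. P g \<Longrightarrow> (\<forall>x. g differentiable (at x)) \<and> (\<forall>v. P (\<lambda>x. frechet_derivative g (at x) v))"
  shows "smooth f"
proof -
  have "P (iter_dir_deriv vs f)" for vs
    by (induction vs) (use assms in auto)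
  thus ?thesis unfolding smooth_def using assms(2) by blast
qed

definition VS :: "('a::real_inner \<Rightarrow> 'b::euclidean_space) set" where
  "VS = {F. \<forall>i\<in>Basis. (\<lambda>x. F x \<bullet> i) \<in> SC}"

lemma VS_deriv:
  assumes "F \<in> VS"
  shows "(\<forall>x. F differentiable (at x)) \<and> (\<forall>v. (\<lambda>x. frechet_derivative F (at x) v) \<in> VS)"
proof -
  have "\<forall>i\<in>Basis. \<exists>D. (\<forall>x. ((\<lambda>x. F x \<bullet> i) has_derivative D x) (at x)) \<and> (\<forall>v. (\<lambda>x. D x v) \<in> SC)"
    using assms SC_deriv unfolding VS_def by blast
  then obtain D where D: "\<And>i. i\<in>Basis \<Longrightarrow> (\<forall>x. ((\<lambda>x. F x \<bullet> i) has_derivative D i x) (at x)) \<and> (\<forall>v. (\<lambda>x. D i x v) \<in> SC)"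
    by metis
  define DF where "DF x v = (\<Sum>i\<in>Basis. D i x v *\<^sub>R i)" for x v
  have comp: "DF x v \<bullet> j = D j x v" if "j \<in> Basis" for x v j
    unfolding DF_def by (rule inner_sum_left_Basis[OF that])
  have der: "(F has_derivative DF x) (at x)" for x
  proof (rule has_derivative_componentwise_within[THEN iffD2], rule ballI)
    fix i :: 'b assume i: "i \<in> Basis"
    have e: "(\<lambda>y. DF x y \<bullet> i) = D i x" by (rule ext) (rule comp[OF i])
    have "((\<lambda>x. F x \<bullet> i) has_derivative D i x) (at x)" using D[OF i] by blast
    thus "((\<lambda>x. F x \<bullet> i) has_derivative (\<lambda>y. DF x y \<bullet> i)) (at x)" unfolding e .
  qed
  have "frechet_derivative F (at x) = DF x" for x by (rule frechet_derivative_at[OF der, symmetric])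
  have "(\<lambda>x. frechet_derivative F (at x) v) \<in> VS" for v
    unfolding VS_def mem_Collect_eq
  proof (rule ballI)
    fix i :: 'b assume i: "i \<in> Basis"
    have "(\<lambda>x. frechet_derivative F (at x) v \<bullet> i) = (\<lambda>x. D i x v)"
      using comp[OF i] \<open>\<And>x. frechet_derivative F (at x) = DF x\<close> by simp
    moreover have "(\<lambda>x. D i x v) \<in> SC" using D[OF i] by blast
    ultimately show "(\<lambda>x. frechet_derivative F (at x) v \<bullet> i) \<in> SC" by simp
  qed
  thus ?thesis using der unfolding differentiable_def by blast
qed

lemma VS_smooth: "F \<in> VS \<Longrightarrow> smooth F"
  using smooth_closed[where P="\<lambda>F. F \<in> VS"] VS_deriv by blast



lemma poly_exp_lim: "((\<lambda>y. poly p y * exp (- y)) \<longlongrightarrow> (0::real)) at_top"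
proof -
  have "((\<lambda>y. \<Sum>i\<le>degree p. coeff p i * (y ^ i / exp y)) \<longlongrightarrow> (\<Sum>i\<le>degree p. coeff p i * 0)) at_top"
    by (intro tendsto_intros tendsto_power_div_exp_0)
  moreover have "(\<Sum>i\<le>degree p. coeff p i * (y ^ i / exp y)) = poly p y * exp (- y)" for y :: real
    by (simp add: poly_altdef sum_distrib_left exp_minus divide_inverse mult_ac)
  ultimately show ?thesis by simp
qed

fun PP :: "nat \<Rightarrow> real poly" where
  "PP 0 = 1"
| "PP (Suc n) = monom 1 2 * (PP n - pderiv (PP n))"

definition psi :: "nat \<Rightarrow> real \<Rightarrow> real" where
  "psi n t = (if t > 0 then poly (PP n) (inverse t) * exp (- inverse t) else 0)"

lemma psi_deriv: "(psi n has_real_derivative psi (Suc n) t) (at t)"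
proof (cases "t = 0")
  case True
  have "((\<lambda>y. psi n y / y) \<longlongrightarrow> 0) (at_left 0)"
  proof (rule Lim_transform_eventually[OF tendsto_const])
    show "\<forall>\<^sub>F y in at_left 0. 0 = psi n y / y"
    proof -
      have ev: "eventually (\<lambda>y. y \<in> {-1<..<0}) (at_left (0::real))"
        by (rule eventually_at_left_real) simp
      show ?thesis using ev by eventually_elim (auto simp: psi_def)
    qed
  qed
  moreover have "((\<lambda>y. psi n y / y) \<longlongrightarrow> 0) (at_right 0)"
    unfolding filterlim_at_right_to_top
  proof (rule Lim_transform_eventually[OF poly_exp_lim[of "PP n * [:0,1:]"]])
    show "\<forall>\<^sub>F y in at_top. poly (PP n * [:0, 1:]) y * exp (- y) = psi n (inverse y) / inverse y"
      using eventually_gt_at_top[of 0] by eventually_elim (simp add: psi_def mult_ac divide_inverse)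
  qed
  ultimately have "((\<lambda>y. psi n y / y) \<longlongrightarrow> 0) (at 0)"
    by (simp add: filterlim_at_split)
  moreover have "psi n 0 = 0" "psi (Suc n) 0 = 0" by (auto simp: psi_def)
  ultimately show ?thesis using True by (simp add: has_field_derivative_iff)
next
  case False
  show ?thesis
  proof (cases "t > 0")
    case True
    have "((\<lambda>t. poly (PP n) (inverse t) * exp (- inverse t)) has_real_derivative psi (Suc n) t) (at t)"
      using True
      by (auto intro!: derivative_eq_intros simp: psi_def poly_monom algebra_simps power2_eq_square)
    thus ?thesis
      by (rule has_field_derivative_transform_within_open[where S="{0<..}"]) (use True in \<open>auto simp: psi_def\<close>)
  next
    case False
    hence "t < 0" using \<open>t \<noteq> 0\<close> by simp
    have "((\<lambda>t. 0) has_real_derivative psi (Suc n) t) (at t)"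
      using \<open>t < 0\<close> by (auto intro!: derivative_eq_intros simp: psi_def)
    thus ?thesis
      by (rule has_field_derivative_transform_within_open[where S="{..<0}"]) (use \<open>t < 0\<close> in \<open>auto simp: psi_def\<close>)
  qed
qed

lemma psi_nonneg: "psi 0 t \<ge> 0" by (simp add: psi_def)
lemma psi_pos: "t > 0 \<Longrightarrow> psi 0 t > 0" by (simp add: psi_def)
lemma psi_zero: "t \<le> 0 \<Longrightarrow> psi 0 t = 0" by (simp add: psi_def)



definition hh :: "real \<Rightarrow> real" where
  "hh t = psi 0 (1 - t) / (psi 0 (1 - t) + psi 0 t)"

lemma psi_chain: "\<forall>k t. (psi k has_real_derivative psi (Suc k) t) (at t)"
  using psi_deriv by blast

lemma psi_sum_pos: "psi 0 (1 - t) + psi 0 t > 0"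
proof (cases "t > 0")
  case True thus ?thesis using psi_pos[of t] psi_nonneg[of "1-t"] by linarith
next
  case False thus ?thesis using psi_pos[of "1-t"] psi_nonneg[of t] by linarith
qed

lemma hh_SC: "hh \<in> SC"
  unfolding hh_def
proof (intro SC_divide SC.add SC.chain[OF psi_chain] SC_diff SC.const SC.lin bounded_linear_ident allI)
  show "psi 0 (1 - x) + psi 0 x \<noteq> 0" for x using psi_sum_pos[of x] by simp
qed

definition deriv1 :: "(real \<Rightarrow> real) \<Rightarrow> real \<Rightarrow> real" where
  "deriv1 f = (\<lambda>x. frechet_derivative f (at x) 1)"

lemma SC_real_deriv:
  fixes f :: "real \<Rightarrow> real"
  assumes "f \<in> SC"
  shows "deriv1 f \<in> SC \<and> (\<forall>x. (f has_real_derivative deriv1 f x) (at x))"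
proof -
  obtain D where D: "\<forall>x. (f has_derivative D x) (at x)" "\<forall>v. (\<lambda>x. D x v) \<in> SC"
    using SC_deriv[OF assms] by blast
  have fd: "frechet_derivative f (at x) = D x" for x using D(1) frechet_derivative_at by metis
  have eqD: "D x = (\<lambda>v. deriv1 f x * v)" for x
  proof -
    have "linear (D x)" using D(1) has_derivative_linear by blast
    hence lin_eq: "D x v = v * D x 1" for v using linear_scale[of "D x" v 1] by simp
    have e1: "deriv1 f x = D x 1" by (simp add: deriv1_def fd)
    show ?thesis
    proof (rule ext)
      fix v show "D x v = deriv1 f x * v" unfolding e1 by (simp only: lin_eq[of v] mult.commute)
    qed
  qed
  have "deriv1 f = (\<lambda>x. D x 1)" by (rule ext) (simp add: deriv1_def fd)
  hence 1: "deriv1 f \<in> SC" using D(2) by simp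
  have 2: "(f has_real_derivative deriv1 f x) (at x)" for x
  proof -
    have "(f has_derivative D x) (at x)" using D(1) by blast
    thus ?thesis unfolding has_field_derivative_def eqD .
  qed
  show ?thesis using 1 2 by blast
qed

definition hch :: "nat \<Rightarrow> real \<Rightarrow> real" where
  "hch k = (deriv1 ^^ k) hh"

lemma hch_SC: "hch k \<in> SC"
  by (induction k) (auto simp: hch_def hh_SC dest: SC_real_deriv)

lemma hch_chain: "\<forall>k t. (hch k has_real_derivative hch (Suc k) t) (at t)"
  using SC_real_deriv[OF hch_SC] by (simp add: hch_def)

lemma hch_deriv_intro [derivative_intros]:
  "(f has_real_derivative f') (at x within S) \<Longrightarrow>
   ((\<lambda>x. hch k (f x)) has_real_derivative hch (Suc k) (f x) * f') (at x within S)"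
  using DERIV_chain2[OF hch_chain[rule_format] ] by blast

lemma hch0: "hch 0 = hh" by (simp add: hch_def)

lemma hh_le1: "t \<le> 0 \<Longrightarrow> hh t = 1"
  using psi_pos[of "1-t"] by (simp add: hh_def psi_zero)
lemma hh_ge1: "t \<ge> 1 \<Longrightarrow> hh t = 0"
  by (simp add: hh_def psi_zero)
lemma hh_bounds: "0 \<le> hh t \<and> hh t \<le> 1"
  using psi_sum_pos[of t] psi_nonneg[of t] psi_nonneg[of "1-t"] by (simp add: hh_def divide_le_eq_1)

lemma deriv_zero_local_const:
  fixes f :: "real \<Rightarrow> real"
  assumes "(f has_real_derivative l) (at x)" "d > 0" "\<And>y. \<bar>x - y\<bar> < d \<Longrightarrow> f y = f x"
  shows "l = 0"
proof (rule DERIV_local_max[OF assms(1,2)], intro allI impI)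
  fix y assume "\<bar>x - y\<bar> < d"
  hence "f y = f x" by (rule assms(3))
  thus "f y \<le> f x" by simp
qed

lemma hch1_0: "hch 1 0 = 0"
  using DERIV_local_max[OF hch_chain[rule_format, of 0 0], of 1] hh_bounds hh_le1[of 0]
  by (simp add: hch0)

lemma hch1_ge: "u \<ge> 1 \<Longrightarrow> hch 1 u = 0"
  using DERIV_local_min[OF hch_chain[rule_format, of 0 u], of 1] hh_bounds hh_ge1[of u]
  by (simp add: hch0)

lemma hch1_out: "t < 0 \<or> t > 1 \<Longrightarrow> hch 1 t = 0"
proof -
  assume t: "t < 0 \<or> t > 1"
  have d: "(hh has_real_derivative hch 1 t) (at t)" using hch_chain[rule_format, of 0 t] by (simp add: hch0)
  show ?thesis
  proof (rule deriv_zero_local_const[OF d, of "min \<bar>t\<bar> \<bar>t - 1\<bar>"])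
    show "0 < min \<bar>t\<bar> \<bar>t - 1\<bar>" using t by auto
    fix y assume "\<bar>t - y\<bar> < min \<bar>t\<bar> \<bar>t - 1\<bar>"
    hence "(t < 0 \<and> y < 0) \<or> (t > 1 \<and> y > 1)" using t by auto
    thus "hh y = hh t" using hh_le1 hh_ge1 by auto
  qed
qed

lemma hch2_out: "t < 0 \<or> t > 1 \<Longrightarrow> hch 2 t = 0"
proof -
  assume t: "t < 0 \<or> t > 1"
  have s2: "Suc 1 = (2::nat)" by simp
  have d: "(hch 1 has_real_derivative hch 2 t) (at t)" using hch_chain[rule_format, of 1 t] unfolding s2 .
  show ?thesis
  proof (rule deriv_zero_local_const[OF d, of "min \<bar>t\<bar> \<bar>t - 1\<bar>"])
    show "0 < min \<bar>t\<bar> \<bar>t - 1\<bar>" using t by auto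
    fix y assume "\<bar>t - y\<bar> < min \<bar>t\<bar> \<bar>t - 1\<bar>"
    hence "(t < 0 \<and> y < 0) \<or> (t > 1 \<and> y > 1)" using t by auto
    thus "hch 1 y = hch 1 t" using hch1_out t by auto
  qed
qed

lemma hch_cont: "continuous_on UNIV (hch k)"
  using hch_chain DERIV_isCont continuous_at_imp_continuous_on by blast

lemma bounded_out:
  fixes f :: "real \<Rightarrow> real"
  assumes "continuous_on UNIV f" "\<And>t. t < 0 \<or> t > 1 \<Longrightarrow> f t = 0"
  shows "\<exists>M\<ge>0. \<forall>t. \<bar>f t\<bar> \<le> M"
proof -
  have "compact (f ` {0..1})"
    using assms(1) by (intro compact_continuous_image) (auto intro: continuous_on_subset)
  then obtain M where M: "M > 0" "\<forall>y\<in>f ` {0..1}. norm y \<le> M"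
    using compact_imp_bounded bounded_pos by metis
  have "\<bar>f t\<bar> \<le> M" for t
  proof (cases "t < 0 \<or> t > 1")
    case True thus ?thesis using assms(2) M by simp
  next
    case False thus ?thesis using M by auto
  qed
  thus ?thesis using M by (intro exI[of _ M]) auto
qed

lemma hch1_bd: "\<exists>M\<ge>0. \<forall>t. \<bar>hch 1 t\<bar> \<le> M"
  by (rule bounded_out[OF hch_cont hch1_out])
lemma hch2_bd: "\<exists>M\<ge>0. \<forall>t. \<bar>hch 2 t\<bar> \<le> M"
  by (rule bounded_out[OF hch_cont hch2_out])



definition rot :: "real^2 \<Rightarrow> real^2" where
  "rot x = vector [- (x$2), x$1]"

lemma rot_nth [simp]: "rot x $ 1 = - (x$2)" "rot x $ 2 = x $ 1"
  by (simp_all add: rot_def)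

lemma inner2: "(x::real^2) \<bullet> y = x$1 * y$1 + x$2 * y$2"
  by (simp add: inner_vec_def sum_2)

lemma rot_inner_self [simp]: "rot x \<bullet> x = 0"
  by (simp add: inner2)

lemma rot_inner_self2 [simp]: "x \<bullet> rot x = 0"
  by (simp add: inner2)

lemma rot_inner_rot [simp]: "rot x \<bullet> rot y = x \<bullet> y"
  by (simp add: inner2)

lemma norm_rot [simp]: "norm (rot x) = norm x"
  by (simp add: norm_eq_sqrt_inner)

lemma linear_rot: "linear rot"
  by (rule linearI) (auto simp: vec_eq_iff forall_2)

lemma bl_rot: "bounded_linear rot"
  using linear_rot linear_conv_bounded_linear by blast

lemma rot_trace: "(\<Sum>i\<in>Basis. rot i \<bullet> i) = 0"
  by simp

definition uu :: "real \<Rightarrow> real \<Rightarrow> real" where "uu e s = e * ln ((1 + s) / 2)"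
definition G1 :: "real \<Rightarrow> real \<Rightarrow> real" where "G1 e s = hch 1 (uu e s) * e / (1 + s)"
definition G2 :: "real \<Rightarrow> real \<Rightarrow> real" where
  "G2 e s = hch 2 (uu e s) * (e / (1 + s))^2 - hch 1 (uu e s) * e / (1 + s)^2"

definition Psi :: "real^2 \<Rightarrow> real \<Rightarrow> real^2 \<Rightarrow> real^2" where
  "Psi l e x = hch 0 (uu e (x \<bullet> x)) *\<^sub>R l - (2 * G1 e (x \<bullet> x) * (rot l \<bullet> x)) *\<^sub>R rot x"

lemma G0_deriv: "s > -1 \<Longrightarrow> ((\<lambda>s. hch 0 (uu e s)) has_real_derivative G1 e s) (at s)"
  unfolding uu_def G1_def
  by (rule derivative_eq_intros refl | simp)+ (simp add: field_simps)

lemma G1_deriv_gen: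
  fixes hs :: "nat \<Rightarrow> real \<Rightarrow> real"
  assumes ch: "\<forall>k t. (hs k has_real_derivative hs (Suc k) t) (at t)" and s: "s > -1"
  shows "((\<lambda>s. hs 1 (e * ln ((1 + s) / 2)) * e / (1 + s)) has_real_derivative
      hs 2 (e * ln ((1 + s) / 2)) * (e / (1 + s))^2 - hs 1 (e * ln ((1 + s) / 2)) * e / (1 + s)^2) (at s)"
proof -
  have u: "((\<lambda>s. e * ln ((1 + s) / 2)) has_real_derivative e / (1 + s)) (at s)"
  proof -
    have g: "((\<lambda>s. (1 + s) / 2) has_real_derivative (0 + 1) / 2) (at s)"
      by (intro DERIV_cdivide DERIV_add DERIV_const DERIV_ident)
    have p: "0 < (1 + s) / 2" using s by simp
    have l: "((\<lambda>s. ln ((1 + s) / 2)) has_real_derivative inverse ((1 + s) / 2) * ((0 + 1) / 2)) (at s)"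
      by (rule DERIV_chain2[OF DERIV_ln[OF p] g])
    have "((\<lambda>s. e * ln ((1 + s) / 2)) has_real_derivative e * (inverse ((1 + s) / 2) * ((0 + 1) / 2))) (at s)"
      by (rule DERIV_cmult[OF l])
    moreover have "e * (inverse ((1 + s) / 2) * ((0 + 1) / 2)) = e / (1 + s)" using s by (simp add: field_simps)
    ultimately show ?thesis by simp
  qed
  have s2: "Suc 1 = (2::nat)" by simp
  have h: "((\<lambda>s. hs 1 (e * ln ((1 + s) / 2))) has_real_derivative hs 2 (e * ln ((1 + s) / 2)) * (e / (1 + s))) (at s)"
    using DERIV_chain2[OF ch[rule_format, of 1] u] unfolding s2 .
  have q: "((\<lambda>s. e / (1 + s)) has_real_derivative - e / (1 + s)^2) (at s)"
  proof -
    have "((\<lambda>s. e / (1 + s)) has_real_derivative (0 * (1 + s) - e * (0 + 1)) / ((1 + s) * (1 + s))) (at s)"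
      using s by (intro DERIV_divide DERIV_const DERIV_add DERIV_ident) simp
    thus ?thesis by (simp add: power2_eq_square)
  qed
  have "((\<lambda>s. hs 1 (e * ln ((1 + s) / 2)) * (e / (1 + s))) has_real_derivative
     hs 1 (e * ln ((1 + s) / 2)) * (- e / (1 + s)^2) + hs 2 (e * ln ((1 + s) / 2)) * (e / (1 + s)) * (e / (1 + s))) (at s)"
    using DERIV_mult[OF h q] by (simp add: mult.commute)
  thus ?thesis by (simp add: power2_eq_square algebra_simps)
qed

lemma G1_deriv: "s > -1 \<Longrightarrow> (G1 e has_real_derivative G2 e s) (at s)"
proof -
  assume s: "s > -1"
  have "G1 e = (\<lambda>s. hch 1 (e * ln ((1 + s) / 2)) * e / (1 + s))"
    by (rule ext) (simp add: G1_def uu_def)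
  moreover have "G2 e s = hch 2 (e * ln ((1 + s) / 2)) * (e / (1 + s))^2 - hch 1 (e * ln ((1 + s) / 2)) * e / (1 + s)^2"
    by (simp add: G2_def uu_def)
  ultimately show ?thesis using G1_deriv_gen[OF hch_chain s] by simp
qed

lemma comp_sq:
  assumes "(f has_real_derivative f') (at (x \<bullet> x))"
  shows "((\<lambda>x. f (x \<bullet> x)) has_derivative (\<lambda>v. f' * (2 * (x \<bullet> v)))) (at x)"
proof -
  have 1: "((\<lambda>x. x \<bullet> x) has_derivative (\<lambda>v. 2 * (x \<bullet> v))) (at x)"
    by (rule derivative_eq_intros refl)+ (auto simp: inner_commute)
  have 2: "(f has_derivative (\<lambda>y. f' * y)) (at (x \<bullet> x))"
    using assms by (simp add: has_field_derivative_def)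
  show ?thesis using has_derivative_compose[OF 1 2] .
qed

definition DPsi :: "real^2 \<Rightarrow> real \<Rightarrow> real^2 \<Rightarrow> real^2 \<Rightarrow> real^2" where
  "DPsi l e x v = (G1 e (x \<bullet> x) * (2 * (x \<bullet> v))) *\<^sub>R l
     - ((G2 e (x \<bullet> x) * (2 * (x \<bullet> v)) * 2 * (rot l \<bullet> x) + 2 * G1 e (x \<bullet> x) * (rot l \<bullet> v)) *\<^sub>R rot x
        + (2 * G1 e (x \<bullet> x) * (rot l \<bullet> x)) *\<^sub>R rot v)"

lemma Psi_deriv: "(Psi l e has_derivative DPsi l e x) (at x)"
proof -
  have q: "x \<bullet> x > -1" using inner_ge_zero[of x] by linarith
  note A = comp_sq[OF G0_deriv[OF q]]
  note B = comp_sq[OF G1_deriv[OF q]]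
  have C: "((\<lambda>x. rot l \<bullet> x) has_derivative (\<lambda>v. rot l \<bullet> v)) (at x)"
    by (intro bounded_linear_imp_has_derivative bounded_linear_inner_right)
  have R: "(rot has_derivative rot) (at x)"
    by (intro bounded_linear_imp_has_derivative bl_rot)
  show ?thesis
    unfolding Psi_def[abs_def]
    apply (rule has_derivative_eq_rhs)
     apply (rule A B C R derivative_eq_intros refl | simp)+
    apply (rule ext)
    apply (simp add: DPsi_def algebra_simps)
    done
qed



lemma uu_SC: "(\<lambda>x::real^2. uu e (x \<bullet> x)) \<in> SC"
proof -
  have "(\<lambda>x::real^2. e * ln ((1 + x \<bullet> x) / 2)) \<in> SC"
  proof (intro SC.mult SC.const SC.ln SC_divide SC.add SC.sq allI)
    fix x :: "real^2"
    show "0 < (1 + x \<bullet> x) / 2" by (simp add: add_pos_nonneg)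
  qed simp
  thus ?thesis by (simp add: uu_def)
qed

lemma G1_SC: "(\<lambda>x::real^2. G1 e (x \<bullet> x)) \<in> SC"
proof -
  have "(\<lambda>x::real^2. hch 1 (uu e (x \<bullet> x)) * e / (1 + x \<bullet> x)) \<in> SC"
  proof (intro SC_divide SC.mult SC.chain[OF hch_chain] uu_SC SC.const SC.add SC.sq allI)
    fix x :: "real^2"
    show "1 + x \<bullet> x \<noteq> 0" using add_pos_nonneg[OF zero_less_one inner_ge_zero[of x]] by simp
  qed
  thus ?thesis by (simp add: G1_def)
qed

lemma Psi_VS: "Psi l e \<in> VS"
  unfolding VS_def mem_Collect_eq
proof (rule ballI)
  fix i :: "real^2" assume "i \<in> Basis"
  have bl: "bounded_linear (\<lambda>x. rot x \<bullet> i)"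
    using bounded_linear_compose[OF bounded_linear_inner_left[of i] bl_rot] by (simp add: o_def)
  have "(\<lambda>x. hch 0 (uu e (x \<bullet> x)) * (l \<bullet> i) - 2 * G1 e (x \<bullet> x) * (rot l \<bullet> x) * (rot x \<bullet> i)) \<in> SC"
    by (intro SC_diff SC.mult SC.chain[OF hch_chain] uu_SC SC.const G1_SC SC.lin bl bounded_linear_inner_right)
  moreover have "(\<lambda>x. Psi l e x \<bullet> i) = (\<lambda>x. hch 0 (uu e (x \<bullet> x)) * (l \<bullet> i) - 2 * G1 e (x \<bullet> x) * (rot l \<bullet> x) * (rot x \<bullet> i))"
    by (auto simp: Psi_def inner_diff_left)
  ultimately show "(\<lambda>x. Psi l e x \<bullet> i) \<in> SC" by simp
qed

lemma Psi_smooth: "smooth (Psi l e)"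
  using VS_smooth[OF Psi_VS] .

lemma fd_Psi: "frechet_derivative (Psi l e) (at x) = DPsi l e x"
  using Psi_deriv frechet_derivative_at by metis

lemma Psi_div: "divergence (Psi l e) x = 0"
proof -
  define a where "a = G1 e (x \<bullet> x) * 2"
  define b where "b = G2 e (x \<bullet> x) * 2 * 2 * (rot l \<bullet> x)"
  define c where "c = 2 * G1 e (x \<bullet> x)"
  have eq: "DPsi l e x i \<bullet> i = a * ((x \<bullet> i) * (l \<bullet> i)) - b * ((x \<bullet> i) * (rot x \<bullet> i)) - c * ((rot l \<bullet> i) * (rot x \<bullet> i))" for i
    by (simp add: DPsi_def a_def b_def c_def inner_diff_left inner_add_left algebra_simps)
  have "divergence (Psi l e) x = (\<Sum>i\<in>Basis. DPsi l e x i \<bullet> i)"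
    by (simp add: divergence_def fd_Psi)
  also have "\<dots> = a * (x \<bullet> l) - b * (x \<bullet> rot x) - c * (rot l \<bullet> rot x)"
    by (simp add: eq sum_subtractf sum_distrib_left[symmetric] euclidean_inner[symmetric])
  also have "\<dots> = 0" by (simp add: a_def c_def inner_commute)
  finally show ?thesis .
qed

lemma Psi_boundary: "norm x = 1 \<Longrightarrow> Psi l e x = l"
proof -
  assume "norm x = 1"
  hence "x \<bullet> x = 1" by (simp add: power2_norm_eq_inner[symmetric])
  thus ?thesis by (simp add: Psi_def uu_def G1_def hch1_0 hch1_0[unfolded One_nat_def] hch0 hh_le1)
qed

lemma Psi_support:
  assumes "e > 0" "x \<bullet> x \<ge> 2 * exp (1 / e)"
  shows "Psi l e x = 0"
proof -
  have "(1 + x \<bullet> x) / 2 \<ge> exp (1/e)" using assms(2) by simp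
  hence "ln ((1 + x \<bullet> x) / 2) \<ge> 1 / e"
    by (metis exp_gt_zero ln_exp ln_le_cancel_iff order_less_le_trans)
  hence "uu e (x \<bullet> x) \<ge> 1" using assms(1) by (simp add: uu_def field_simps)
  thus ?thesis by (simp add: Psi_def G1_def hch1_ge hch1_ge[unfolded One_nat_def] hch0 hh_ge1)
qed

lemma r_le_sq: "(r::real) \<ge> 0 \<Longrightarrow> r \<le> 1 + r^2"
proof (cases "r \<le> 1")
  case True
  have "0 \<le> r^2" by simp
  with True show ?thesis by linarith
next
  case False
  hence "r * 1 \<le> r * r" by (intro mult_left_mono) auto
  thus ?thesis by (simp add: power2_eq_square)
qed

lemma r3_le: "(r::real) \<ge> 0 \<Longrightarrow> r^3 \<le> (1 + r^2)^2"
proof (cases "r \<le> 1")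
  case True
  assume r: "r \<ge> 0"
  have "r^3 \<le> 1" using r True by (rule power_le_one)
  also have "1 \<le> (1 + r^2)^2" by (rule one_le_power) simp
  finally show ?thesis .
next
  case False
  have "r^3 \<le> r^4" using False by (intro power_increasing) auto
  also have "r^4 = (r^2)^2" by simp
  also have "\<dots> \<le> (1 + r^2)^2" by (intro power_mono) auto
  finally show ?thesis .
qed

lemma Psi_compact:
  assumes "e > 0"
  shows "compact (closure {x \<in> closure F0. Psi l e x \<noteq> 0})"
proof -
  have "{x \<in> closure F0. Psi l e x \<noteq> 0} \<subseteq> cball 0 (1 + 2 * exp (1 / e))"
  proof
    fix x assume "x \<in> {x \<in> closure F0. Psi l e x \<noteq> 0}"
    hence "x \<bullet> x < 2 * exp (1 / e)" using Psi_support[OF assms, of x l] by force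
    moreover have "norm x \<le> 1 + x \<bullet> x"
    proof -
      have "norm x \<le> 1 + norm x ^ 2" by (rule r_le_sq) simp
      thus ?thesis by (simp add: power2_norm_eq_inner)
    qed
    ultimately show "x \<in> cball 0 (1 + 2 * exp (1 / e))" by simp
  qed
  hence "bounded {x \<in> closure F0. Psi l e x \<noteq> 0}" using bounded_cball bounded_subset by blast
  thus ?thesis using compact_closure by blast
qed



lemma DPsi_bound1:
  "norm (DPsi l e x v) \<le> (6 * \<bar>G1 e (x \<bullet> x)\<bar> * norm x + 4 * \<bar>G2 e (x \<bullet> x)\<bar> * norm x ^ 3) * norm l * norm v"
proof -
  define A where "A = G1 e (x \<bullet> x)"
  define B where "B = G2 e (x \<bullet> x)"
  define r where "r = norm x"
  define nl where "nl = norm l"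
  define nv where "nv = norm v"
  have xv: "\<bar>x \<bullet> v\<bar> \<le> r * nv" unfolding r_def nv_def by (rule Cauchy_Schwarz_ineq2)
  have L: "\<bar>rot l \<bullet> x\<bar> \<le> nl * r" unfolding r_def nl_def using Cauchy_Schwarz_ineq2[of "rot l" x] by simp
  have lv: "\<bar>rot l \<bullet> v\<bar> \<le> nl * nv" unfolding nv_def nl_def using Cauchy_Schwarz_ineq2[of "rot l" v] by simp
  have pos: "r \<ge> 0" "nl \<ge> 0" "nv \<ge> 0" by (auto simp: r_def nl_def nv_def)
  have "norm (DPsi l e x v) \<le> \<bar>A * (2 * (x \<bullet> v))\<bar> * nl
      + \<bar>B * (2 * (x \<bullet> v)) * 2 * (rot l \<bullet> x) + 2 * A * (rot l \<bullet> v)\<bar> * r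
      + \<bar>2 * A * (rot l \<bullet> x)\<bar> * nv"
    unfolding DPsi_def A_def B_def r_def nl_def nv_def
    by (rule order_trans[OF norm_triangle_ineq4] order_trans[OF add_mono[OF order_refl norm_triangle_ineq]] | simp)+
  also have "\<dots> \<le> (2 * \<bar>A\<bar> * (r * nv)) * nl + (4 * \<bar>B\<bar> * (r * nv) * (nl * r) + 2 * \<bar>A\<bar> * (nl * nv)) * r
      + 2 * \<bar>A\<bar> * (nl * r) * nv"
  proof -
    have aA: "0 \<le> 2 * \<bar>A\<bar>" "0 \<le> 4 * \<bar>B\<bar>" by simp_all
    have 1: "\<bar>A * (2 * (x \<bullet> v))\<bar> \<le> 2 * \<bar>A\<bar> * (r * nv)"
    proof -
      have "\<bar>A * (2 * (x \<bullet> v))\<bar> = (2 * \<bar>A\<bar>) * \<bar>x \<bullet> v\<bar>" by (simp add: abs_mult)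
      also have "\<dots> \<le> (2 * \<bar>A\<bar>) * (r * nv)" by (rule mult_left_mono[OF xv aA(1)])
      finally show ?thesis .
    qed
    have 2: "\<bar>B * (2 * (x \<bullet> v)) * 2 * (rot l \<bullet> x)\<bar> \<le> 4 * \<bar>B\<bar> * (r * nv) * (nl * r)"
    proof -
      have "\<bar>B * (2 * (x \<bullet> v)) * 2 * (rot l \<bullet> x)\<bar> = (4 * \<bar>B\<bar>) * (\<bar>x \<bullet> v\<bar> * \<bar>rot l \<bullet> x\<bar>)"
        by (simp add: abs_mult)
      also have "\<dots> \<le> (4 * \<bar>B\<bar>) * ((r * nv) * (nl * r))"
        by (rule mult_left_mono[OF mult_mono[OF xv L] aA(2)]) (use pos in simp_all)
      finally show ?thesis by (simp add: mult.assoc)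
    qed
    have 3: "\<bar>2 * A * (rot l \<bullet> v)\<bar> \<le> 2 * \<bar>A\<bar> * (nl * nv)"
    proof -
      have "\<bar>2 * A * (rot l \<bullet> v)\<bar> = (2 * \<bar>A\<bar>) * \<bar>rot l \<bullet> v\<bar>" by (simp add: abs_mult)
      also have "\<dots> \<le> (2 * \<bar>A\<bar>) * (nl * nv)" by (rule mult_left_mono[OF lv aA(1)])
      finally show ?thesis .
    qed
    have 4: "\<bar>2 * A * (rot l \<bullet> x)\<bar> \<le> 2 * \<bar>A\<bar> * (nl * r)"
    proof -
      have "\<bar>2 * A * (rot l \<bullet> x)\<bar> = (2 * \<bar>A\<bar>) * \<bar>rot l \<bullet> x\<bar>" by (simp add: abs_mult)
      also have "\<dots> \<le> (2 * \<bar>A\<bar>) * (nl * r)" by (rule mult_left_mono[OF L aA(1)])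
      finally show ?thesis .
    qed
    have 23: "\<bar>B * (2 * (x \<bullet> v)) * 2 * (rot l \<bullet> x) + 2 * A * (rot l \<bullet> v)\<bar> \<le> 4 * \<bar>B\<bar> * (r * nv) * (nl * r) + 2 * \<bar>A\<bar> * (nl * nv)"
      by (rule order_trans[OF abs_triangle_ineq add_mono[OF 2 3]])
    show ?thesis
      by (intro add_mono mult_right_mono 1 23 4 pos)
  qed
  also have "\<dots> = (6 * \<bar>A\<bar> * r + 4 * \<bar>B\<bar> * r ^ 3) * nl * nv"
    by (simp add: algebra_simps power3_eq_cube)
  finally show ?thesis by (simp add: A_def B_def r_def nl_def nv_def)
qed

lemma G1_bound:
  assumes "\<forall>t. \<bar>hch 1 t\<bar> \<le> M1" "e > 0"
  shows "\<bar>G1 e (x \<bullet> x)\<bar> * norm x \<le> M1 * e"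
proof -
  define r where "r = norm x"
  have q: "x \<bullet> x = r ^ 2" by (simp add: r_def power2_norm_eq_inner)
  have r: "r \<ge> 0" by (simp add: r_def)
  have rb: "r \<le> 1 + r^2" using r by (rule r_le_sq)
  have M1: "\<bar>hch 1 (uu e (r^2))\<bar> \<le> M1" "M1 \<ge> 0" using assms(1) abs_ge_zero order_trans by blast+
  have "\<bar>G1 e (x \<bullet> x)\<bar> * norm x = \<bar>hch 1 (uu e (r^2))\<bar> * e * (r / (1 + r^2))"
    using assms(2) r by (simp add: G1_def q abs_mult abs_divide r_def[symmetric])
  also have "\<dots> \<le> M1 * e * 1"
    using M1 assms(2) rb r by (intro mult_mono) (auto simp: divide_le_eq_1 add_pos_nonneg)
  finally show ?thesis by simp
qed

lemma G2_bound:
  assumes "\<forall>t. \<bar>hch 1 t\<bar> \<le> M1" "\<forall>t. \<bar>hch 2 t\<bar> \<le> M2" "e > 0" "e \<le> 1"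
  shows "\<bar>G2 e (x \<bullet> x)\<bar> * norm x ^ 3 \<le> (M1 + M2) * e"
proof -
  define r where "r = norm x"
  define d where "d = 1 + r^2"
  have q: "x \<bullet> x = r ^ 2" by (simp add: r_def power2_norm_eq_inner)
  have r: "r \<ge> 0" by (simp add: r_def)
  have d: "d \<ge> 1" by (simp add: d_def)
  have rb: "r ^ 3 \<le> d ^ 2"
    unfolding d_def using r by (rule r3_le)
  have M: "\<bar>hch 1 (uu e (r^2))\<bar> \<le> M1" "\<bar>hch 2 (uu e (r^2))\<bar> \<le> M2" "M1 \<ge> 0" "M2 \<ge> 0"
    using assms(1,2) abs_ge_zero order_trans by blast+
  have "\<bar>G2 e (x \<bullet> x)\<bar> \<le> \<bar>hch 2 (uu e (r^2))\<bar> * (e / d)^2 + \<bar>hch 1 (uu e (r^2))\<bar> * e / d^2"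
  proof -
    define h1 where "h1 = hch 1 (uu e (r^2))"
    define h2 where "h2 = hch 2 (uu e (r^2))"
    have "\<bar>G2 e (x \<bullet> x)\<bar> = \<bar>h2 * (e / d)^2 - h1 * e / d^2\<bar>"
      by (simp add: G2_def q d_def h1_def h2_def)
    also have "\<dots> \<le> \<bar>h2 * (e / d)^2\<bar> + \<bar>h1 * e / d^2\<bar>" by (rule abs_triangle_ineq4)
    also have "\<bar>h2 * (e / d)^2\<bar> = \<bar>h2\<bar> * (e / d)^2" by (simp add: abs_mult)
    also have "\<bar>h1 * e / d^2\<bar> = \<bar>h1\<bar> * e / d^2" using assms(3) by (simp add: abs_mult abs_divide)
    finally show ?thesis by (simp add: h1_def h2_def)
  qed
  also have "\<dots> \<le> M2 * (e / d)^2 + M1 * e / d^2"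
    using M assms(3) d by (intro add_mono mult_right_mono divide_right_mono) auto
  also have "\<dots> = (M2 * e^2 + M1 * e) / d^2" using d by (simp add: add_divide_distrib power2_eq_square power_divide)
  finally have G: "\<bar>G2 e (x \<bullet> x)\<bar> \<le> (M2 * e^2 + M1 * e) / d^2" .
  have "\<bar>G2 e (x \<bullet> x)\<bar> * norm x ^ 3 \<le> (M2 * e^2 + M1 * e) / d^2 * d^2"
    using G rb r unfolding r_def[symmetric] by (intro mult_mono) auto
  also have "\<dots> = M2 * e^2 + M1 * e" using d by simp
  also have "\<dots> \<le> (M1 + M2) * e"
    using M assms(3,4) by (simp add: power2_eq_square algebra_simps mult_left_mono mult_right_le_one_le)
  finally show ?thesis .
qed



theorem lemma9:
  fixes \<Psi> :: "real^2 \<Rightarrow> real^2" and l :: "real^2"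
  assumes "in_H \<Psi>"
    and "AE x in lebesgue. x \<in> S0 \<longrightarrow> \<Psi> x = l"
  shows "\<exists>\<Psi>t :: real \<Rightarrow> real^2 \<Rightarrow> real^2.
           (\<forall>\<epsilon>\<in>{0<..1}.
              smooth (\<Psi>t \<epsilon>) \<and>
              compact (closure {x \<in> closure F0. \<Psi>t \<epsilon> x \<noteq> 0}) \<and>
              (\<forall>x\<in>closure F0. divergence (\<Psi>t \<epsilon>) x = 0) \<and>
              (\<forall>x\<in>frontier S0. \<Psi>t \<epsilon> x = l)) \<and>
           (\<forall>\<delta>>0. \<exists>e0>0. \<forall>\<epsilon>\<in>{0<..1}. \<epsilon> < e0 \<longrightarrow>
              (\<forall>x\<in>F0. onorm (frechet_derivative (\<Psi>t \<epsilon>) (at x)) \<le> \<delta>))"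
proof (intro exI[of _ "Psi l"] conjI ballI allI impI)
  fix e :: real assume e: "e \<in> {0<..1}"
  show "smooth (Psi l e)" by (rule Psi_smooth)
  show "compact (closure {x \<in> closure F0. Psi l e x \<noteq> 0})" using e by (intro Psi_compact) auto
  show "divergence (Psi l e) x = 0" for x by (rule Psi_div)
  show "Psi l e x = l" if "x \<in> frontier S0" for x
    using that by (intro Psi_boundary) (simp add: S0_def)
next
  fix \<delta> :: real assume d: "\<delta> > 0"
  obtain M1 where M1: "M1 \<ge> 0" "\<forall>t. \<bar>hch 1 t\<bar> \<le> M1" using hch1_bd by blast
  obtain M2 where M2: "M2 \<ge> 0" "\<forall>t. \<bar>hch 2 t\<bar> \<le> M2" using hch2_bd by blast
  define C where "C = (10 * M1 + 4 * M2) * norm l"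
  have C: "C \<ge> 0" using M1 M2 by (simp add: C_def)
  show "\<exists>e0>0. \<forall>\<epsilon>\<in>{0<..1}. \<epsilon> < e0 \<longrightarrow> (\<forall>x\<in>F0. onorm (frechet_derivative (Psi l \<epsilon>) (at x)) \<le> \<delta>)"
  proof (intro exI[of _ "\<delta> / (C + 1)"] conjI ballI impI)
    show "0 < \<delta> / (C + 1)" using d C by simp
    fix e x assume e: "e \<in> {0<..1}" "e < \<delta> / (C + 1)" and x: "x \<in> F0"
    have "onorm (DPsi l e x) \<le> C * e"
    proof (rule onorm_le)
      fix v
      have "norm (DPsi l e x v) \<le> (6 * \<bar>G1 e (x \<bullet> x)\<bar> * norm x + 4 * \<bar>G2 e (x \<bullet> x)\<bar> * norm x ^ 3) * norm l * norm v"
        by (rule DPsi_bound1)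
      also have "\<dots> \<le> (6 * (M1 * e) + 4 * ((M1 + M2) * e)) * norm l * norm v"
        using G1_bound[OF M1(2), of e x] G2_bound[OF M1(2) M2(2), of e x] e
        by (intro mult_right_mono add_mono) auto
      also have "\<dots> = C * e * norm v" by (simp add: C_def algebra_simps)
      finally show "norm (DPsi l e x v) \<le> C * e * norm v" .
    qed
    also have "C * e \<le> C * (\<delta> / (C + 1))" using e C by (intro mult_left_mono) auto
    also have "\<dots> \<le> \<delta>" using C d by (simp add: field_simps)
    finally show "onorm (frechet_derivative (Psi l e) (at x)) \<le> \<delta>" by (simp add: fd_Psi)
  qed
qed

end
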